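(* Let $\alpha=1+\sqrt2$. Then for every integer $n\ge1$, $$\Big\lceil \alpha n-\tfrac{1}{\sqrt2}\Big\rceil-\alpha n+\tfrac{1}{\sqrt2}>\frac{\alpha-1}{4\alpha n}.$$ *)

theory Defs
  imports Complex_Main
begin

end

theory Submission
  imports Defs
begin

theorem mainTheorem7:
  fixes n :: nat
  assumes "n \<ge> 1"
  shows "let \<alpha> = 1 + sqrt 2 in
    real_of_int \<lceil>\<alpha> * real n - 1 / sqrt 2\<rceil> - \<alpha> * real n + 1 / sqrt 2
      > (\<alpha> - 1) / (4 * \<alpha> * real n)"
proof -
  define s where "s = sqrt (2::real)"
  have s2: "s * s = 2" unfolding s_def by simp
  have spos: "s > 1" unfolding s_def by (simp add: real_less_rsqrt)
  have sl: "s < 3/2"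
  proof (rule ccontr)
    assume "\<not> s < 3/2"
    hence "3/2 * (3/2) \<le> s * s" by (intro mult_mono) auto
    thus False using s2 by simp
  qed
  define x where "x = (1 + s) * real n - 1 / s"
  define c where "c = \<lceil>x\<rceil>"
  define k where "k = c - int n"
  define d where "d = real_of_int c - x"
  have d0: "d \<ge> 0" "d < 1" unfolding d_def c_def by (auto simp: ceiling_correct) (linarith)
  have dk: "d = real_of_int k - (2 * real n - 1) / s"
    unfolding d_def k_def x_def using spos s2 by (simp add: field_simps)
  have dks: "d * s = real_of_int k * s - (2 * real n - 1)"
    using dk spos by (simp add: field_simps)
  have key: "(real_of_int k * s) * (real_of_int k * s) = 2 * real_of_int (k*k)"
    using s2 by (simp add: algebra_simps)
  have par: "2 * k * k \<noteq> (2 * int n - 1) * (2 * int n - 1)"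
  proof
    assume "2 * k * k = (2 * int n - 1) * (2 * int n - 1)"
    hence "even ((2 * int n - 1) * (2 * int n - 1))" by (metis dvd_triv_left mult.assoc)
    thus False by simp
  qed
  have dne: "d \<noteq> 0"
  proof
    assume "d = 0"
    hence "real_of_int k * s = 2 * real n - 1" using dks by simp
    hence "2 * real_of_int (k*k) = (2 * real n - 1) * (2 * real n - 1)" using key by simp
    hence "real_of_int (2 * k * k) = real_of_int ((2 * int n - 1) * (2 * int n - 1))" by simp
    hence "2 * k * k = (2 * int n - 1) * (2 * int n - 1)" by (simp only: of_int_eq_iff)
    with par show False by simp
  qed
  hence dp: "d > 0" using d0 by simp
  have gt: "real_of_int k * s > 2 * real n - 1" proof -
    have "d * s > 0" using dp spos by simp
    thus ?thesis using dks by linarith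
  qed
  have n1: "real n \<ge> 1" using assms by simp
  have "real_of_int (2*k*k) > real_of_int ((2 * int n - 1) * (2 * int n - 1))"
  proof -
    have "(2 * real n - 1) * (2 * real n - 1) < (real_of_int k * s) * (real_of_int k * s)"
      using gt n1 by (intro mult_strict_mono) auto
    thus ?thesis using key by simp
  qed
  hence "2*k*k > (2 * int n - 1) * (2 * int n - 1)" by (simp only: of_int_less_iff)
  hence ge1: "2*k*k - (2 * int n - 1) * (2 * int n - 1) \<ge> 1" by simp
  have prod: "d * s * (real_of_int k * s + (2 * real n - 1)) = real_of_int (2*k*k - (2 * int n - 1) * (2 * int n - 1))"
  proof -
    have "d * s * (real_of_int k * s + (2 * real n - 1)) = (real_of_int k * s) * (real_of_int k * s) - (2 * real n - 1) * (2 * real n - 1)"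
      unfolding dks by (simp add: algebra_simps)
    also have "\<dots> = real_of_int (2*k*k - (2 * int n - 1) * (2 * int n - 1))"
      unfolding key using assms by (simp add: of_nat_diff)
    finally show ?thesis .
  qed
  have ub: "real_of_int k * s < 2 * real n - 1 + s"
  proof -
    have "d * s < s" using d0 spos by simp
    thus ?thesis using dks by linarith
  qed
  have A: "d * s * (4 * real n - 2 + s) > 1"
  proof -
    have "1 \<le> d * s * (real_of_int k * s + (2 * real n - 1))" using prod ge1
      by (metis of_int_1 of_int_le_iff)
    also have "\<dots> < d * s * (4 * real n - 2 + s)"
      using ub dp spos by (intro mult_strict_left_mono) auto
    finally show ?thesis .
  qed
  have goal: "d > s / (4 * (1 + s) * real n)"
  proof -
    have pos: "4 * (1 + s) * real n > 0" using spos n1 by simp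
    have m: "(s - 1) * real n \<ge> (s - 1) * 1" using spos n1 by (intro mult_left_mono) auto
    have B: "2 * (4 * real n - 2 + s) < 4 * (1 + s) * real n"
      using m spos by (simp add: algebra_simps)
    have C: "d * s * (4 * real n - 2 + s) * s = d * (2 * (4 * real n - 2 + s))"
    proof -
      have "d * s * (4 * real n - 2 + s) * s = d * (s * s) * (4 * real n - 2 + s)" by (simp add: algebra_simps)
      thus ?thesis using s2 by simp
    qed
    have "s * 1 < s * (d * s * (4 * real n - 2 + s))" using A spos by (intro mult_strict_left_mono) auto
    hence "s < d * s * (4 * real n - 2 + s) * s" by (simp only: mult.commute mult_1_right)
    also have "\<dots> < d * (4 * (1 + s) * real n)" unfolding C using B dp by simp
    finally show ?thesis using pos by (simp add: field_simps)
  qed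
  show ?thesis using goal unfolding Let_def d_def c_def x_def s_def by (simp add: algebra_simps)
qed

end
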